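(* Let $\theta=(\mathrm{vec}(W),b^{(v)},b^{(h)})\in\mathbb{R}^d$ collect the parameters of a binary RBM, and consider the $\ell_2$-regularized Contrastive Divergence recursion $\theta_{t+1}=\theta_t+\eta(G_t-\Lambda\theta_t)$, where $G_t$ is the stochastic Contrastive Divergence gradient estimate at step $t$ and $\Lambda=\mathrm{diag}(\psi_W I,\psi_b I,\psi_b I)$ with $\psi_W>0$, $\psi_b>0$. Assume: (1) the minibatch size is finite; (2) visible units are binary; (3) hidden activations lie in $(0,1)$; (4) $0<\eta\psi_{\max}<2$, where $\psi_{\max}=\max(\psi_W,\psi_b)$. Then $\sup_{t\ge0}\|\theta_t\|_2<\infty$.
   Context: The CD gradient estimate $G_t$ consists of differences between minibatch data statistics and negative-phase (model) statistics: for the weights, averaged visible–hidden correlations $v h^\top$ (data minus model), and for the biases, averaged unit activations (data minus model), computed from binary visible vectors and hidden activations/samples in $[0,1]$ as in standard RBM training. $\|\cdot\|_2$ is the Euclidean norm on $\mathbb{R}^d$. The sampling temperature may be fixed or time-varying. *)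

theory Defs
  imports "HOL-Analysis.Analysis"
begin

text \<open>Parameters of a binary RBM with visible index type 'v and hidden index type 'h:
  theta = (W, b_v, b_h).  The norm on the product type is the Euclidean norm of the
  concatenated vector (vec W, b_v, b_h) (Frobenius norm on the matrix part).\<close>

type_synonym ('v, 'h) rbm_params = "(real ^ 'h ^ 'v) \<times> (real ^ 'v) \<times> (real ^ 'h)"

definition binary_vec :: "real ^ 'n \<Rightarrow> bool" where
  "binary_vec x \<longleftrightarrow> (\<forall>i. x $ i \<in> {0, 1})"

definition unit_cube_vec :: "real ^ 'n \<Rightarrow> bool" where
  "unit_cube_vec x \<longleftrightarrow> (\<forall>i. x $ i \<in> {0..1})"

definition cd_grad ::
  "nat \<Rightarrow> (nat \<Rightarrow> real ^ 'v::finite) \<Rightarrow> (nat \<Rightarrow> real ^ 'h::finite) \<Rightarrow> (nat \<Rightarrow> real ^ 'v) \<Rightarrow> (nat \<Rightarrow> real ^ 'h)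
   \<Rightarrow> ('v, 'h) rbm_params" where
  "cd_grad B vdat hdat vmod hmod =
    ((1 / real B) *\<^sub>R (\<Sum>k<B. (\<chi> i j. vdat k $ i * hdat k $ j - vmod k $ i * hmod k $ j)),
     (1 / real B) *\<^sub>R (\<Sum>k<B. vdat k - vmod k),
     (1 / real B) *\<^sub>R (\<Sum>k<B. hdat k - hmod k))"

definition reg_op :: "real \<Rightarrow> real \<Rightarrow> ('v::finite, 'h::finite) rbm_params \<Rightarrow> ('v, 'h) rbm_params" where
  "reg_op psiW psib \<theta> = (psiW *\<^sub>R fst \<theta>, psib *\<^sub>R fst (snd \<theta>), psib *\<^sub>R snd (snd \<theta>))"

end

theory Submission
  imports Defs
begin

lemma contract_bound:
  fixes x g :: "nat \<Rightarrow> 'a::real_normed_vector"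
  assumes a: "\<bar>a\<bar> < 1" and g: "\<And>t. norm (g t) \<le> M"
    and rec: "\<And>t. x (Suc t) = a *\<^sub>R x t + g t"
  shows "norm (x t) \<le> max (norm (x 0)) (M / (1 - \<bar>a\<bar>))"
proof (induction t)
  case 0 then show ?case by simp
next
  case (Suc t)
  define R where "R = max (norm (x 0)) (M / (1 - \<bar>a\<bar>))"
  have pos: "0 < 1 - \<bar>a\<bar>" using a by simp
  have MR: "M \<le> (1 - \<bar>a\<bar>) * R"
  proof -
    have "M / (1 - \<bar>a\<bar>) \<le> R" unfolding R_def by simp
    then have "(1 - \<bar>a\<bar>) * (M / (1 - \<bar>a\<bar>)) \<le> (1 - \<bar>a\<bar>) * R"
      by (rule mult_left_mono) (use pos in auto)
    then show ?thesis using pos by simp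
  qed
  have "norm (x (Suc t)) \<le> \<bar>a\<bar> * norm (x t) + M"
    using rec[of t] g[of t] norm_triangle_ineq[of "a *\<^sub>R x t" "g t"] by simp
  also have "\<dots> \<le> \<bar>a\<bar> * R + M"
    using Suc unfolding R_def by (simp add: mult_left_mono)
  also have "\<dots> \<le> R"
  proof -
    have "(1 - \<bar>a\<bar>) * R = R - \<bar>a\<bar> * R" by (simp add: algebra_simps)
    then show ?thesis using MR by linarith
  qed
  finally show ?case unfolding R_def .
qed

lemma avg_bound:
  fixes f :: "nat \<Rightarrow> 'a::real_normed_vector"
  assumes "0 < B" "\<And>k. k < B \<Longrightarrow> norm (f k) \<le> M"
  shows "norm ((1 / real B) *\<^sub>R (\<Sum>k<B. f k)) \<le> M"
proof -
  have "norm (\<Sum>k<B. f k) \<le> (\<Sum>k<B. M)"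
    by (rule order_trans[OF norm_sum sum_mono]) (use assms in auto)
  then have "norm (\<Sum>k<B. f k) \<le> real B * M" by simp
  then show ?thesis using assms(1) by (simp add: field_simps)
qed

lemma vec_bound:
  fixes x :: "real ^ 'n::finite"
  assumes "\<And>i. \<bar>x $ i\<bar> \<le> 1"
  shows "norm x \<le> real CARD('n)"
proof -
  have "norm x \<le> (\<Sum>i\<in>UNIV. \<bar>x $ i\<bar>)" by (rule norm_le_l1_cart)
  also have "\<dots> \<le> (\<Sum>i\<in>(UNIV::'n set). 1)" by (rule sum_mono) (use assms in auto)
  finally show ?thesis by simp
qed

lemma mat_bound:
  fixes A :: "real ^ 'h::finite ^ 'v::finite"
  assumes "\<And>i j. \<bar>A $ i $ j\<bar> \<le> 1"
  shows "norm A \<le> real CARD('v) * real CARD('h)"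
proof -
  have "norm A \<le> (\<Sum>i\<in>UNIV. norm (A $ i))"
    unfolding norm_vec_def[of A] by (rule L2_set_le_sum) simp
  also have "\<dots> \<le> (\<Sum>i\<in>(UNIV::'v set). real CARD('h))"
    by (rule sum_mono) (rule vec_bound, use assms in auto)
  finally show ?thesis by simp
qed

lemma prod_fact:
  assumes v: "v \<in> {0::real, 1}" and h: "h \<in> {0..1::real}"
  shows "v * h \<in> {0..1}"
  using v h by auto

lemma diff_bound: "a \<in> {0..1::real} \<Longrightarrow> b \<in> {0..1} \<Longrightarrow> \<bar>a - b\<bar> \<le> 1"
  by auto

theorem theorem4:
  fixes \<theta> :: "nat \<Rightarrow> ('v::finite, 'h::finite) rbm_params"
    and B :: nat
    and vdat vmod :: "nat \<Rightarrow> nat \<Rightarrow> real ^ 'v"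
    and hdat hmod :: "nat \<Rightarrow> nat \<Rightarrow> real ^ 'h"
    and \<eta> psiW psib :: real
  assumes B_pos: "0 < B"
    and vis_binary: "\<And>t k. k < B \<Longrightarrow> binary_vec (vdat t k) \<and> binary_vec (vmod t k)"
    and hid_unit: "\<And>t k. k < B \<Longrightarrow> unit_cube_vec (hdat t k) \<and> unit_cube_vec (hmod t k)"
    and psiW_pos: "0 < psiW" and psib_pos: "0 < psib"
    and step_lo: "0 < \<eta> * max psiW psib" and step_hi: "\<eta> * max psiW psib < 2"
    and recursion: "\<And>t. \<theta> (Suc t) =
       \<theta> t + \<eta> *\<^sub>R (cd_grad B (vdat t) (hdat t) (vmod t) (hmod t) - reg_op psiW psib (\<theta> t))"
  shows "bdd_above (range (\<lambda>t. norm (\<theta> t)))"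
proof -
  have eta: "0 < \<eta>" using step_lo psiW_pos psib_pos
    by (metis max.strict_order_iff max_def mult_neg_pos not_less_iff_gr_or_eq order.asym zero_less_mult_iff)
  have aW: "\<bar>1 - \<eta> * psiW\<bar> < 1"
  proof -
    have "\<eta> * psiW \<le> \<eta> * max psiW psib" using eta by (simp add: mult_left_mono)
    moreover have "0 < \<eta> * psiW" using eta psiW_pos by simp
    ultimately show ?thesis unfolding abs_less_iff using step_hi by linarith
  qed
  have ab: "\<bar>1 - \<eta> * psib\<bar> < 1"
  proof -
    have "\<eta> * psib \<le> \<eta> * max psiW psib" using eta by (simp add: mult_left_mono)
    moreover have "0 < \<eta> * psib" using eta psib_pos by simp
    ultimately show ?thesis unfolding abs_less_iff using step_hi by linarith
  qed
  define gW where "gW t = fst (cd_grad B (vdat t) (hdat t) (vmod t) (hmod t))" for t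
  define gv where "gv t = fst (snd (cd_grad B (vdat t) (hdat t) (vmod t) (hmod t)))" for t
  define gh where "gh t = snd (snd (cd_grad B (vdat t) (hdat t) (vmod t) (hmod t)))" for t
  have vv: "vdat t k $ i \<in> {0,1} \<and> vmod t k $ i \<in> {0,1}" if "k < B" for t k i
    using vis_binary[OF that] unfolding binary_vec_def by auto
  have hh: "hdat t k $ i \<in> {0..1} \<and> hmod t k $ i \<in> {0..1}" if "k < B" for t k i
    using hid_unit[OF that] unfolding unit_cube_vec_def by auto
  have eW: "\<bar>vdat t k $ i * hdat t k $ j - vmod t k $ i * hmod t k $ j\<bar> \<le> 1"
    if "k < B" for t k i j
  proof (rule diff_bound)
    show "vdat t k $ i * hdat t k $ j \<in> {0..1}"
      by (rule prod_fact) (use vv[OF that, of t i] hh[OF that, of t j] in auto)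
    show "vmod t k $ i * hmod t k $ j \<in> {0..1}"
      by (rule prod_fact) (use vv[OF that, of t i] hh[OF that, of t j] in auto)
  qed
  have ev: "\<bar>(vdat t k - vmod t k) $ i\<bar> \<le> 1" if "k < B" for t k i
    using diff_bound vv[OF that, of t i] by auto
  have eh: "\<bar>(hdat t k - hmod t k) $ i\<bar> \<le> 1" if "k < B" for t k i
    using diff_bound hh[OF that, of t i] by auto
  have bW: "norm (gW t) \<le> real CARD('v) * real CARD('h)" for t
    unfolding gW_def cd_grad_def fst_conv
  proof (rule avg_bound[OF B_pos])
    fix k assume k: "k < B"
    show "norm (\<chi> i j. vdat t k $ i * hdat t k $ j - vmod t k $ i * hmod t k $ j)
        \<le> real CARD('v) * real CARD('h)"
      by (rule mat_bound) (simp add: eW[OF k])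
  qed
  have bv: "norm (gv t) \<le> real CARD('v)" for t
    unfolding gv_def cd_grad_def fst_conv snd_conv
  proof (rule avg_bound[OF B_pos])
    fix k assume k: "k < B"
    show "norm (vdat t k - vmod t k) \<le> real CARD('v)"
      by (rule vec_bound) (rule ev[OF k])
  qed
  have bh: "norm (gh t) \<le> real CARD('h)" for t
    unfolding gh_def cd_grad_def fst_conv snd_conv
  proof (rule avg_bound[OF B_pos])
    fix k assume k: "k < B"
    show "norm (hdat t k - hmod t k) \<le> real CARD('h)"
      by (rule vec_bound) (rule eh[OF k])
  qed
  have rW: "fst (\<theta> (Suc t)) = (1 - \<eta> * psiW) *\<^sub>R fst (\<theta> t) + \<eta> *\<^sub>R gW t" for t
    unfolding recursion[of t] gW_def reg_op_def by (simp add: algebra_simps)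
  have rv: "fst (snd (\<theta> (Suc t))) = (1 - \<eta> * psib) *\<^sub>R fst (snd (\<theta> t)) + \<eta> *\<^sub>R gv t" for t
    unfolding recursion[of t] gv_def reg_op_def by (simp add: algebra_simps)
  have rh: "snd (snd (\<theta> (Suc t))) = (1 - \<eta> * psib) *\<^sub>R snd (snd (\<theta> t)) + \<eta> *\<^sub>R gh t" for t
    unfolding recursion[of t] gh_def reg_op_def by (simp add: algebra_simps)
  have nW: "norm (\<eta> *\<^sub>R gW t) \<le> \<eta> * (real CARD('v) * real CARD('h))" for t
    using bW[of t] eta by (simp add: mult_left_mono)
  have nv: "norm (\<eta> *\<^sub>R gv t) \<le> \<eta> * real CARD('v)" for t
    using bv[of t] eta by (simp add: mult_left_mono)
  have nh: "norm (\<eta> *\<^sub>R gh t) \<le> \<eta> * real CARD('h)" for t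
    using bh[of t] eta by (simp add: mult_left_mono)
  note cW = contract_bound[of _ "\<lambda>t. \<eta> *\<^sub>R gW t" _ "\<lambda>t. fst (\<theta> t)", OF aW nW rW]
  note cv = contract_bound[of _ "\<lambda>t. \<eta> *\<^sub>R gv t" _ "\<lambda>t. fst (snd (\<theta> t))", OF ab nv rv]
  note ch = contract_bound[of _ "\<lambda>t. \<eta> *\<^sub>R gh t" _ "\<lambda>t. snd (snd (\<theta> t))", OF ab nh rh]
  show ?thesis
  proof (rule bdd_aboveI2)
    fix t
    obtain a b c where abc: "\<theta> t = (a, b, c)" by (cases "\<theta> t") auto
    have "norm (\<theta> t) \<le> norm a + (norm b + norm c)"
      unfolding abc by (rule order_trans[OF norm_Pair_le]) (simp add: norm_Pair_le)
    also have "\<dots> \<le> max (norm (fst (\<theta> 0))) (\<eta> * (real CARD('v) * real CARD('h)) / (1 - \<bar>1 - \<eta> * psiW\<bar>))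
       + (max (norm (fst (snd (\<theta> 0)))) (\<eta> * real CARD('v) / (1 - \<bar>1 - \<eta> * psib\<bar>))
       + max (norm (snd (snd (\<theta> 0)))) (\<eta> * real CARD('h) / (1 - \<bar>1 - \<eta> * psib\<bar>)))"
      using cW[of t] cv[of t] ch[of t] unfolding abc by simp
    finally show "norm (\<theta> t) \<le> \<dots>" .
  qed
qed

end
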